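(* In the setting of the FedSLoP algorithm (see context), under Assumptions A1 and A2, suppose the stepsize satisfies $\eta^2\le \frac{1-\mu^2}{6L^2\tau^3}$. Then for every round $t$, $$D_t\le \frac{6\tau^4}{1-\mu^2}\,\eta^2\Big(\underline{\delta}\,\|\nabla f(\theta^t)\|^2+\sigma_L^2+\sigma_G^2\Big).$$
   Context: Setting. Let $d,N,\tau$ be positive integers, $r$ an integer with $1\le r\le d$, $\underline{\delta}:=r/d\in(0,1]$, $\mu\in[0,1)$, $\eta>0$, $L>0$. Let $F_1,\dots,F_N:\mathbb{R}^d\to\mathbb{R}$ be differentiable and $f(\theta):=\frac1N\sum_{i=1}^N F_i(\theta)$. Assumption A1: $f$ is bounded below by $f_*>-\infty$, and $f$ and every $F_i$ are $L$-smooth (gradients $L$-Lipschitz). Assumption A2: each stochastic gradient $g_{i,s}=\nabla F_i(\theta_{i,s};\xi_{i,s})$ computed by the algorithm satisfies, conditionally on all randomness generated before it (including $\Pi_t$ and $\theta_{i,s}$), $\mathbb{E}[g_{i,s}]=\nabla F_i(\theta_{i,s})$ and $\mathbb{E}\|g_{i,s}-\nabla F_i(\theta_{i,s})\|^2\le\sigma_L^2$, the minibatch samples of different clients are conditionally independent; and $\|\nabla F_i(\theta)-\nabla f(\theta)\|^2\le\sigma_G^2$ for all $i$ and all $\theta\in\mathbb{R}^d$. Algorithm (FedSLoP, full participation). Start from $\theta^0\in\mathbb{R}^d$. In each round $t=0,1,\dots$: sample $P_t$ from the Haar (uniform, $O(d)$-invariant) distribution on $\mathrm{St}(d,r)=\{P\in\mathbb{R}^{d\times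 r}:P^\top P=I_r\}$, independently of all past randomness and of data sampling, and set $\Pi_t=P_tP_t^\top$. Each client $i=1,\dots,N$ sets $\theta_{i,0}=\theta^t$, $v_{i,0}=0$, and for $s=0,\dots,\tau-1$: $v_{i,s+1}=\mu v_{i,s}+\Pi_t g_{i,s}$, $\theta_{i,s+1}=\theta_{i,s}-\eta v_{i,s+1}$. The server sets $\theta^{t+1}=\theta^t+\frac1N\sum_{i=1}^N(\theta_{i,\tau}-\theta^t)$. Notation. $\mathbb{E}_t[\cdot]$ is the conditional expectation given $\theta^t$ and all randomness up to the start of round $t$ (so it averages over $\Pi_t$ and the round-$t$ minibatches). The drift is $D_t:=\frac1N\sum_{i=1}^N\sum_{s=0}^{\tau-1}\mathbb{E}_t\big[\|\theta_{i,s}-\theta^t\|^2\big]$. *)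

theory Defs
  imports "HOL-Analysis.Analysis" "HOL-Probability.Probability"
begin

definition proj_of :: "real^'r^'d \<Rightarrow> real^'d^'d" where
  "proj_of P = P ** transpose P"

text \<open>P (a random d x r matrix) has the Haar (uniform, O(d)-invariant) distribution on the
  Stiefel manifold St(d,r): it is a measurable random matrix with orthonormal columns
  almost surely, and its law is invariant under left multiplication by every orthogonal Q.
  (This characterizes the Haar probability measure on St(d,r) uniquely.)\<close>
definition haar_stiefel :: "'w measure \<Rightarrow> ('w \<Rightarrow> real^'r^'d) \<Rightarrow> bool" where
  "haar_stiefel M P \<longleftrightarrow>
     P \<in> borel_measurable M \<and>
     (AE w in M. transpose (P w) ** P w = mat 1) \<and>
     (\<forall>Q::real^'d^'d. orthogonal_matrix Q \<longrightarrow>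
        distr M borel (\<lambda>w. Q ** P w) = distr M borel P)"

primrec fedslop_local ::
  "real \<Rightarrow> real \<Rightarrow> real^'d \<Rightarrow> real^'d^'d \<Rightarrow> (nat \<Rightarrow> real^'d) \<Rightarrow> nat \<Rightarrow> (real^'d) \<times> (real^'d)" where
  "fedslop_local \<mu> \<eta> th0 Proj g 0 = (0, th0)"
| "fedslop_local \<mu> \<eta> th0 Proj g (Suc s) =
     (let (v, th) = fedslop_local \<mu> \<eta> th0 Proj g s;
          v' = \<mu> *\<^sub>R v + Proj *v g s
      in (v', th - \<eta> *\<^sub>R v'))"

definition fedslop_theta ::
  "real \<Rightarrow> real \<Rightarrow> real^'d \<Rightarrow> real^'d^'d \<Rightarrow> (nat \<Rightarrow> real^'d) \<Rightarrow> nat \<Rightarrow> real^'d" where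
  "fedslop_theta \<mu> \<eta> th0 Proj g s = snd (fedslop_local \<mu> \<eta> th0 Proj g s)"

definition before_step ::
  "'w measure \<Rightarrow> ('w \<Rightarrow> real^'r^'d) \<Rightarrow> (nat \<Rightarrow> nat \<Rightarrow> 'w \<Rightarrow> real^'d) \<Rightarrow> nat \<Rightarrow> nat \<Rightarrow> 'w measure" where
  "before_step M P g N s =
     sigma (space M)
       ({P -` A \<inter> space M | A. A \<in> sets (borel :: (real^'r^'d) measure)} \<union>
        {g j s' -` A \<inter> space M | A j s'. A \<in> sets (borel :: (real^'d) measure) \<and> j < N \<and> s' < s})"

end

theory Submission
  imports Defs
begin


lemma fl_Suc_fst: "fst (fedslop_local \<mu> \<eta> th0 Pr g (Suc s)) = \<mu> *\<^sub>R fst (fedslop_local \<mu> \<eta> th0 Pr g s) + Pr *v g s"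
  by (simp add: case_prod_beta Let_def)
lemma fl_Suc_snd: "snd (fedslop_local \<mu> \<eta> th0 Pr g (Suc s)) = snd (fedslop_local \<mu> \<eta> th0 Pr g s) - \<eta> *\<^sub>R (\<mu> *\<^sub>R fst (fedslop_local \<mu> \<eta> th0 Pr g s) + Pr *v g s)"
  by (simp add: case_prod_beta Let_def)

lemma fl_v_closed: "fst (fedslop_local \<mu> \<eta> th0 Pr g s) = (\<Sum>j<s. (\<mu> ^ (s - 1 - j)) *\<^sub>R (Pr *v g j))"
proof (induction s)
  case 0 then show ?case by simp
next
  case (Suc s)
  have "\<mu> *\<^sub>R (\<Sum>j<s. (\<mu> ^ (s - 1 - j)) *\<^sub>R (Pr *v g j)) = (\<Sum>j<s. (\<mu> ^ (Suc s - 1 - j)) *\<^sub>R (Pr *v g j))"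
    unfolding scaleR_sum_right
    by (intro sum.cong refl) (simp add: Suc_diff_Suc[symmetric] power_Suc[symmetric] del: power_Suc)
  then show ?case unfolding fl_Suc_fst Suc by simp
qed

definition cc :: "real \<Rightarrow> nat \<Rightarrow> nat \<Rightarrow> real" where "cc \<mu> s j = (\<Sum>m<s-j. \<mu> ^ m)"

lemma fl_th_closed: "snd (fedslop_local \<mu> \<eta> th0 Pr g s) = th0 - \<eta> *\<^sub>R (\<Sum>j<s. cc \<mu> s j *\<^sub>R (Pr *v g j))"
proof (induction s)
  case 0 then show ?case by simp
next
  case (Suc s)
  have c: "cc \<mu> (Suc s) j = cc \<mu> s j + \<mu> ^ (s - j)" if "j < s" for j
    using that by (simp add: cc_def Suc_diff_le)
  have "(\<Sum>j<Suc s. cc \<mu> (Suc s) j *\<^sub>R (Pr *v g j)) = (\<Sum>j<s. cc \<mu> (Suc s) j *\<^sub>R (Pr *v g j)) + Pr *v g s"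
    by (simp add: cc_def)
  also have "(\<Sum>j<s. cc \<mu> (Suc s) j *\<^sub>R (Pr *v g j)) = (\<Sum>j<s. cc \<mu> s j *\<^sub>R (Pr *v g j)) + (\<Sum>j<s. (\<mu> ^ (s - j)) *\<^sub>R (Pr *v g j))"
    by (simp add: c scaleR_add_left sum.distrib)
  also have "(\<Sum>j<s. (\<mu> ^ (s - j)) *\<^sub>R (Pr *v g j)) = \<mu> *\<^sub>R fst (fedslop_local \<mu> \<eta> th0 Pr g s)"
    by (simp add: fl_v_closed scaleR_sum_right) (intro sum.cong refl, simp add: Suc_diff_Suc power_Suc[symmetric] del: power_Suc)
  finally show ?case unfolding fl_Suc_snd Suc by (simp add: algebra_simps)
qed

lemma cc_le1: "\<mu> \<le> 1 \<Longrightarrow> 0 \<le> \<mu> \<Longrightarrow> cc \<mu> s j \<le> real (s - j)"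
  unfolding cc_def using sum_bounded_above[of "{..<s-j}" "\<lambda>m. \<mu>^m" 1] by (simp add: power_le_one)

lemma cc_le2: "\<mu> < 1 \<Longrightarrow> 0 \<le> \<mu> \<Longrightarrow> cc \<mu> s j \<le> 1 / (1 - \<mu>)"
proof -
  assume a: "\<mu> < 1" "0 \<le> \<mu>"
  have "cc \<mu> s j = (1 - \<mu> ^ (s-j)) / (1 - \<mu>)" unfolding cc_def using a
    by (simp add: sum_gp_strict)
  also have "\<dots> \<le> 1 / (1 - \<mu>)" using a by (intro divide_right_mono) auto
  finally show ?thesis .
qed

lemma cc_nonneg: "0 \<le> \<mu> \<Longrightarrow> 0 \<le> cc \<mu> s j"
  unfolding cc_def by (intro sum_nonneg) auto



lemma sum_sj: "(\<Sum>j<s. real (s - j)) = real s * (real s + 1) / 2"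
proof (induction s)
  case 0 then show ?case by simp
next
  case (Suc s)
  have "(\<Sum>j<Suc s. real (Suc s - j)) = (\<Sum>j<s. real (Suc s - j)) + 1" by simp
  also have "(\<Sum>j<s. real (Suc s - j)) = (\<Sum>j<s. real (s - j) + 1)"
    by (rule sum.cong) (auto simp: Suc_diff_le)
  also have "\<dots> = (\<Sum>j<s. real (s - j)) + real s" by (subst sum.distrib) simp
  finally show ?case unfolding Suc.IH by (simp add: field_simps)
qed

lemma cc_sq_sum: assumes "0 \<le> \<mu>" "\<mu> < 1"
  shows "(\<Sum>j<s. (cc \<mu> s j)\<^sup>2) \<le> real s * (real s + 1) / (1 - \<mu>\<^sup>2)"
proof -
  have A: "1 / (1 - \<mu>) \<le> 2 / (1 - \<mu>\<^sup>2)"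
  proof -
    have "1 - \<mu>\<^sup>2 = (1 - \<mu>) * (1 + \<mu>)" by (simp add: power2_eq_square algebra_simps)
    then show ?thesis using assms by (simp add: divide_simps)
  qed
  have cj: "(cc \<mu> s j)\<^sup>2 \<le> real (s - j) * (2 / (1 - \<mu>\<^sup>2))" for j
  proof -
    have "(cc \<mu> s j)\<^sup>2 = cc \<mu> s j * cc \<mu> s j" by (simp add: power2_eq_square)
    also have "\<dots> \<le> real (s - j) * (1 / (1 - \<mu>))"
      using cc_le1[of \<mu> s j] cc_le2[of \<mu> s j] cc_nonneg[of \<mu> s j] assms
      by (intro mult_mono) auto
    also have "\<dots> \<le> real (s - j) * (2 / (1 - \<mu>\<^sup>2))" using A by (intro mult_left_mono) auto
    finally show ?thesis .
  qed
  have "(\<Sum>j<s. (cc \<mu> s j)\<^sup>2) \<le> (\<Sum>j<s. real (s - j) * (2 / (1 - \<mu>\<^sup>2)))"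
    by (rule sum_mono, rule cj)
  also have "\<dots> = (\<Sum>j<s. real (s - j)) * (2 / (1 - \<mu>\<^sup>2))"
    by (rule sum_distrib_right[symmetric])
  also have "\<dots> = real s * (real s + 1) / (1 - \<mu>\<^sup>2)"
    unfolding sum_sj by simp
  finally show ?thesis .
qed

lemma th_bound: assumes "0 \<le> \<mu>" "\<mu> < 1"
  shows "(norm (snd (fedslop_local \<mu> \<eta> th0 Pr g s) - th0))\<^sup>2
     \<le> \<eta>\<^sup>2 * (real s * (real s + 1) / (1 - \<mu>\<^sup>2)) * (\<Sum>j<s. (norm (Pr *v g j))\<^sup>2)"
proof -
  have "(norm (snd (fedslop_local \<mu> \<eta> th0 Pr g s) - th0))\<^sup>2
      = \<eta>\<^sup>2 * (norm (\<Sum>j<s. cc \<mu> s j *\<^sub>R (Pr *v g j)))\<^sup>2"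
    by (simp add: fl_th_closed power_mult_distrib)
  also have "(norm (\<Sum>j<s. cc \<mu> s j *\<^sub>R (Pr *v g j)))\<^sup>2 \<le> (\<Sum>j<s. cc \<mu> s j * norm (Pr *v g j))\<^sup>2"
  proof -
    have "norm (\<Sum>j<s. cc \<mu> s j *\<^sub>R (Pr *v g j)) \<le> (\<Sum>j<s. norm (cc \<mu> s j *\<^sub>R (Pr *v g j)))"
      by (rule norm_sum)
    also have "\<dots> = (\<Sum>j<s. cc \<mu> s j * norm (Pr *v g j))"
      using cc_nonneg[OF assms(1)] by (simp add: abs_of_nonneg)
    finally show ?thesis by (intro power_mono) auto
  qed
  also have "(\<Sum>j<s. cc \<mu> s j * norm (Pr *v g j))\<^sup>2 \<le> (\<Sum>j<s. (cc \<mu> s j)\<^sup>2) * (\<Sum>j<s. (norm (Pr *v g j))\<^sup>2)"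
    by (rule Cauchy_Schwarz_ineq_sum)
  also have "\<dots> \<le> (real s * (real s + 1) / (1 - \<mu>\<^sup>2)) * (\<Sum>j<s. (norm (Pr *v g j))\<^sup>2)"
    by (intro mult_right_mono cc_sq_sum assms sum_nonneg) auto
  finally show ?thesis by (simp add: mult_left_mono)
qed



lemma stiefel_isometry:
  fixes Pm :: "real^'r^'d"
  assumes "transpose Pm ** Pm = mat 1"
  shows "norm (Pm *v u) = norm u"
proof -
  have "(norm (Pm *v u))\<^sup>2 = inner (Pm *v u) (Pm *v u)" by (simp add: power2_norm_eq_inner)
  also have "\<dots> = inner ((Pm *v u) v* Pm) u" by (simp add: dot_lmul_matrix)
  also have "(Pm *v u) v* Pm = transpose Pm *v (Pm *v u)" by simp
  also have "\<dots> = u" by (simp add: matrix_vector_mul_assoc assms del: transpose_matrix_vector)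
  finally have "(norm (Pm *v u))\<^sup>2 = (norm u)\<^sup>2" by (simp add: power2_norm_eq_inner)
  then show ?thesis using power2_eq_imp_eq by force
qed

lemma stiefel_proj:
  fixes Pm :: "real^'r^'d"
  assumes "transpose Pm ** Pm = mat 1"
  shows "norm (proj_of Pm *v x) = norm (transpose Pm *v x)"
    and "norm (proj_of Pm *v x) \<le> norm x"
proof -
  let ?u = "transpose Pm *v x"
  have e: "proj_of Pm *v x = Pm *v ?u"
    by (simp add: proj_of_def matrix_vector_mul_assoc del: transpose_matrix_vector)
  show 1: "norm (proj_of Pm *v x) = norm ?u" unfolding e by (rule stiefel_isometry[OF assms])
  have "(norm ?u)\<^sup>2 = inner (x v* Pm) ?u" by (simp add: power2_norm_eq_inner)
  also have "\<dots> = inner x (Pm *v ?u)" by (rule dot_lmul_matrix)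
  also have "\<dots> \<le> norm x * norm (Pm *v ?u)" by (rule norm_cauchy_schwarz)
  also have "\<dots> = norm x * norm ?u" using stiefel_isometry[OF assms] by simp
  finally have "norm ?u * norm ?u \<le> norm x * norm ?u" by (simp add: power2_eq_square)
  then have "norm ?u \<le> norm x"
    by (cases "norm ?u = 0") (auto simp: mult_le_cancel_right)
  then show "norm (proj_of Pm *v x) \<le> norm x" using 1 by simp
qed



lemma cont_Tz: "continuous_on UNIV (\<lambda>A::real^'r^'d. (norm (transpose A *v z))\<^sup>2)"
  unfolding matrix_vector_mult_def transpose_def
  by (intro continuous_intros)

lemma cont_projv: "continuous_on UNIV (\<lambda>x::((real^'r^'d) \<times> (real^'d)). proj_of (fst x) *v snd x)"
  unfolding proj_of_def matrix_vector_mult_def matrix_matrix_mult_def transpose_def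
  by (intro continuous_intros)

lemma sum_rows_sq:
  fixes Pm :: "real^'r^'d"
  assumes "transpose Pm ** Pm = mat 1"
  shows "(\<Sum>k\<in>UNIV. (norm (transpose Pm *v axis k 1))\<^sup>2) = real CARD('r)"
proof -
  have row: "transpose Pm *v axis k 1 = Pm $ k" for k
    by (simp add: vec_eq_iff matrix_vector_mult_def transpose_def axis_def if_distrib cong: if_cong)
  have "(\<Sum>k\<in>UNIV. (norm (transpose Pm *v axis k 1))\<^sup>2) = (\<Sum>k\<in>UNIV. \<Sum>l\<in>UNIV. Pm $ k $ l * Pm $ k $ l)"
    unfolding row by (simp add: power2_norm_eq_inner inner_vec_def)
  also have "\<dots> = (\<Sum>l\<in>UNIV. \<Sum>k\<in>UNIV. Pm $ k $ l * Pm $ k $ l)" by (rule sum.swap)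
  also have "\<dots> = (\<Sum>l\<in>UNIV. (transpose Pm ** Pm) $ l $ l)"
    by (simp add: matrix_matrix_mult_def transpose_def)
  also have "\<dots> = real CARD('r)" unfolding assms by (simp add: mat_def)
  finally show ?thesis .
qed

lemma haar_expect:
  fixes M :: "'w measure" and P :: "'w \<Rightarrow> real^'r::finite^'d::finite" and z :: "real^'d"
  assumes prob: "prob_space M" and haar: "haar_stiefel M P"
  shows "integrable M (\<lambda>w. (norm (proj_of (P w) *v z))\<^sup>2)"
    and "(\<integral>w. (norm (proj_of (P w) *v z))\<^sup>2 \<partial>M) = real CARD('r) / real CARD('d) * (norm z)\<^sup>2"
proof -
  interpret prob_space M by (rule prob)
  have Pm[measurable]: "P \<in> borel_measurable M" and AEo: "AE w in M. transpose (P w) ** P w = mat 1"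
    and inv: "\<And>Q::real^'d^'d. orthogonal_matrix Q \<Longrightarrow> distr M borel (\<lambda>w. Q ** P w) = distr M borel P"
    using haar unfolding haar_stiefel_def by auto
  define T where "T x w = (norm (transpose (P w) *v x))\<^sup>2" for x w
  have Tm: "T x \<in> borel_measurable M" for x
    unfolding T_def by (rule borel_measurable_continuous_on[OF cont_Tz Pm])
  have Tint: "integrable M (T x)" for x
  proof (rule integrable_const_bound[where B="(norm x)\<^sup>2"])
    show "AE w in M. norm (T x w) \<le> (norm x)\<^sup>2"
      using AEo
    proof eventually_elim
      case (elim w)
      then show ?case using stiefel_proj[OF elim, of x] unfolding T_def
        by (simp add: power_mono)
    qed
  qed (rule Tm)
  have Teq: "AE w in M. (norm (proj_of (P w) *v z))\<^sup>2 = T z w"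
    using AEo by eventually_elim (simp add: T_def stiefel_proj(1))
  have Tinv: "(\<integral>w. T z w \<partial>M) = (\<integral>w. T (axis k 1) w \<partial>M)" if nz: "norm z = 1" for z k
  proof -
    obtain A where A: "orthogonal_matrix A" "A *v (axis k 1) = z"
      using orthogonal_matrix_exists_basis[OF nz] by metis
    have hm: "(\<lambda>B::real^'r^'d. (norm (transpose B *v z))\<^sup>2) \<in> borel_measurable borel"
      by (rule borel_measurable_continuous_onI[OF cont_Tz])
    have mQ: "(\<lambda>w. A ** P w) \<in> measurable M borel"
    proof -
      have "continuous_on UNIV (\<lambda>B::real^'r^'d. A ** B)"
        unfolding matrix_matrix_mult_def by (intro continuous_intros)
      then show ?thesis by (rule borel_measurable_continuous_on) (rule Pm)
    qed
    have "(\<integral>w. T z w \<partial>M) = integral\<^sup>L (distr M borel P) (\<lambda>B. (norm (transpose B *v z))\<^sup>2)"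
      unfolding T_def by (rule integral_distr[OF Pm hm, symmetric])
    also have "\<dots> = integral\<^sup>L (distr M borel (\<lambda>w. A ** P w)) (\<lambda>B. (norm (transpose B *v z))\<^sup>2)"
      using inv[OF A(1)] by simp
    also have "\<dots> = (\<integral>w. (norm (transpose (A ** P w) *v z))\<^sup>2 \<partial>M)"
      by (rule integral_distr[OF mQ hm])
    also have "\<dots> = (\<integral>w. T (axis k 1) w \<partial>M)"
    proof -
      have pw: "(norm (transpose (A ** P w) *v z))\<^sup>2 = T (axis k 1) w" for w
      proof -
        have "transpose A *v z = axis k 1"
          using A unfolding orthogonal_matrix
          by (metis matrix_vector_mul_assoc matrix_vector_mul_lid)
        then have "transpose (A ** P w) *v z = transpose (P w) *v axis k 1"
          by (metis matrix_transpose_mul matrix_vector_mul_assoc)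
        then show ?thesis by (simp add: T_def)
      qed
      show ?thesis by (simp only: pw)
    qed
    finally show ?thesis .
  qed
  obtain k0 :: 'd where True by simp
  define c where "c = (\<integral>w. T (axis k0 1) w \<partial>M)"
  have ck: "(\<integral>w. T (axis k 1) w \<partial>M) = c" for k
    unfolding c_def using Tinv[of "axis k 1" k0] by simp
  have "real CARD('d) * c = (\<Sum>k\<in>UNIV. (\<integral>w. T (axis k 1) w \<partial>M))"
    by (simp add: ck)
  also have "\<dots> = (\<integral>w. (\<Sum>k\<in>UNIV. T (axis k 1) w) \<partial>M)"
    using Bochner_Integration.integral_sum[where I=UNIV and M=M and f="\<lambda>k. T (axis k 1)"] Tint by simp
  also have "\<dots> = (\<integral>w. real CARD('r) \<partial>M)"
  proof (rule integral_cong_AE)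
    show "(\<lambda>w. \<Sum>k\<in>UNIV. T (axis k 1) w) \<in> borel_measurable M"
      using Tm by (intro borel_measurable_sum) auto
    show "AE w in M. (\<Sum>k\<in>UNIV. T (axis k 1) w) = real CARD('r)"
      using AEo by eventually_elim (simp add: T_def sum_rows_sq del: transpose_matrix_vector)
  qed simp
  also have "\<dots> = real CARD('r)" by (simp add: prob_space)
  finally have cval: "c = real CARD('r) / real CARD('d)" by (simp add: field_simps)
  have Tz: "(\<integral>w. T z w \<partial>M) = real CARD('r) / real CARD('d) * (norm z)\<^sup>2"
  proof (cases "z = 0")
    case True then show ?thesis by (simp add: T_def)
  next
    case False
    let ?u = "z /\<^sub>R norm z"
    have nu: "norm ?u = 1" using False by simp
    have "T z w = (norm z)\<^sup>2 * T ?u w" for w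
    proof -
      have "z = norm z *\<^sub>R ?u" using False by simp
      then have "transpose (P w) *v z = norm z *\<^sub>R (transpose (P w) *v ?u)"
        by (metis matrix_vector_mult_scaleR)
      then show ?thesis by (simp add: T_def power_mult_distrib)
    qed
    then have "(\<integral>w. T z w \<partial>M) = (norm z)\<^sup>2 * (\<integral>w. T ?u w \<partial>M)" by simp
    also have "(\<integral>w. T ?u w \<partial>M) = c" using Tinv[OF nu, of k0] ck by simp
    finally show ?thesis using cval by simp
  qed
  have pm: "(\<lambda>w. (norm (proj_of (P w) *v z))\<^sup>2) \<in> borel_measurable M"
  proof -
    have "continuous_on UNIV (\<lambda>A::real^'r^'d. (norm (proj_of A *v z))\<^sup>2)"
      unfolding proj_of_def matrix_vector_mult_def matrix_matrix_mult_def transpose_def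
      by (intro continuous_intros)
    then show ?thesis by (rule borel_measurable_continuous_on) (rule Pm)
  qed
  have Teq': "AE w in M. T z w = (norm (proj_of (P w) *v z))\<^sup>2"
    using Teq by eventually_elim simp
  show "integrable M (\<lambda>w. (norm (proj_of (P w) *v z))\<^sup>2)"
    by (rule integrable_cong_AE_imp[OF Tint pm Teq'])
  show "(\<integral>w. (norm (proj_of (P w) *v z))\<^sup>2 \<partial>M) = real CARD('r) / real CARD('d) * (norm z)\<^sup>2"
    using integral_cong_AE[OF pm Tm Teq] Tz by simp
qed


lemma cond_exp_bound:
  assumes prob: "prob_space M" and sub: "subalgebra M F" and f: "integrable M f"
    and ae: "AE w in M. real_cond_exp M F f w \<le> c"
  shows "(\<integral>w. f w \<partial>M) \<le> c"
proof -
  interpret prob_space M by (rule prob)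
  interpret finite_measure_subalgebra M F
    by unfold_locales (rule sub)
  have "(\<integral>w. f w \<partial>M) = (\<integral>w. real_cond_exp M F f w \<partial>M)"
    using real_cond_exp_int(2)[OF f] by simp
  also have "\<dots> \<le> (\<integral>w. c \<partial>M)"
    by (rule integral_mono_AE[OF real_cond_exp_int(1)[OF f] _ ae]) simp
  also have "\<dots> = c" by (simp add: prob_space)
  finally show ?thesis .
qed

lemma before_step_sub:
  fixes P :: "'w \<Rightarrow> real^'r::finite^'d::finite" and g :: "nat \<Rightarrow> nat \<Rightarrow> 'w \<Rightarrow> real^'d"
  assumes Pm: "P \<in> borel_measurable M"
    and gm: "\<And>j s'. j < N \<Longrightarrow> s' < s \<Longrightarrow> g j s' \<in> borel_measurable M"
  shows "subalgebra M (before_step M P g N s)"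
proof -
  let ?G = "{P -` A \<inter> space M | A. A \<in> sets (borel :: (real^'r^'d) measure)} \<union>
        {g j s' -` A \<inter> space M | A j s'. A \<in> sets (borel :: (real^'d) measure) \<and> j < N \<and> s' < s}"
  have G: "?G \<subseteq> sets M"
    using measurable_sets[OF Pm] measurable_sets[OF gm] by blast
  have GP: "?G \<subseteq> Pow (space M)" by blast
  show ?thesis unfolding subalgebra_def before_step_def
    using sets.sigma_sets_subset[OF G] by (simp add: sets_measure_of[OF GP] space_measure_of_conv)
qed

lemma fl_meas:
  fixes P :: "'w \<Rightarrow> real^'r::finite^'d::finite" and gg :: "nat \<Rightarrow> 'w \<Rightarrow> real^'d"
  assumes Pm: "P \<in> borel_measurable M"
    and gm: "\<And>j. j < s \<Longrightarrow> gg j \<in> borel_measurable M"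
  shows "(\<lambda>w. fst (fedslop_local \<mu> \<eta> th0 (proj_of (P w)) (\<lambda>s'. gg s' w) s)) \<in> borel_measurable M
       \<and> (\<lambda>w. snd (fedslop_local \<mu> \<eta> th0 (proj_of (P w)) (\<lambda>s'. gg s' w) s)) \<in> borel_measurable M"
  using gm
proof (induction s)
  case 0 then show ?case by simp
next
  case (Suc s)
  have IH: "(\<lambda>w. fst (fedslop_local \<mu> \<eta> th0 (proj_of (P w)) (\<lambda>s'. gg s' w) s)) \<in> borel_measurable M"
     "(\<lambda>w. snd (fedslop_local \<mu> \<eta> th0 (proj_of (P w)) (\<lambda>s'. gg s' w) s)) \<in> borel_measurable M"
    using Suc by auto
  have pg: "(\<lambda>w. proj_of (P w) *v gg s w) \<in> borel_measurable M"
    using borel_measurable_continuous_Pair[OF Pm Suc.prems[of s], where H="\<lambda>A y. proj_of A *v y"] cont_projv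
    by simp
  show ?case unfolding fl_Suc_fst fl_Suc_snd
    using IH pg by (intro conjI borel_measurable_add borel_measurable_diff borel_measurable_scaleR) auto
qed

lemma four_terms:
  fixes Pr :: "real^'d^'d"
  assumes nx: "\<And>x. norm (Pr *v x) \<le> norm x" and L: "0 \<le> L"
    and lip: "norm (Ga - Gb) \<le> L * norm (a - b)" and het: "(norm (Gb - Gf))\<^sup>2 \<le> sG"
  shows "(norm (Pr *v gv))\<^sup>2 \<le> 4 * ((norm (gv - Ga))\<^sup>2 + sG + (norm (Pr *v Gf))\<^sup>2 + L\<^sup>2 * (norm (a - b))\<^sup>2)"
proof -
  have e: "Pr *v gv = Pr *v (gv - Ga) + Pr *v (Ga - Gb) + Pr *v (Gb - Gf) + Pr *v Gf"
    by (simp add: matrix_vector_right_distrib[symmetric])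
  define n1 where "n1 = norm (Pr *v (gv - Ga))"
  define n2 where "n2 = norm (Pr *v (Ga - Gb))"
  define n3 where "n3 = norm (Pr *v (Gb - Gf))"
  define n4 where "n4 = norm (Pr *v Gf)"
  have t: "norm (Pr *v gv) \<le> n1 + n2 + n3 + n4"
    unfolding e n1_def n2_def n3_def n4_def by (intro norm_triangle_le add_mono order_refl)
  have "(norm (Pr *v gv))\<^sup>2 \<le> (n1 + n2 + n3 + n4)\<^sup>2" by (rule power_mono[OF t]) simp
  also have "\<dots> \<le> 4 * (n1\<^sup>2 + n2\<^sup>2 + n3\<^sup>2 + n4\<^sup>2)"
  proof -
    have "4 * (n1\<^sup>2 + n2\<^sup>2 + n3\<^sup>2 + n4\<^sup>2) - (n1 + n2 + n3 + n4)\<^sup>2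
       = (n1-n2)\<^sup>2+(n1-n3)\<^sup>2+(n1-n4)\<^sup>2+(n2-n3)\<^sup>2+(n2-n4)\<^sup>2+(n3-n4)\<^sup>2"
      by (simp add: power2_eq_square algebra_simps)
    moreover have "0 \<le> (n1-n2)\<^sup>2+(n1-n3)\<^sup>2+(n1-n4)\<^sup>2+(n2-n3)\<^sup>2+(n2-n4)\<^sup>2+(n3-n4)\<^sup>2"
      by simp
    ultimately show ?thesis by linarith
  qed
  also have "\<dots> \<le> 4 * ((norm (gv - Ga))\<^sup>2 + sG + (norm (Pr *v Gf))\<^sup>2 + L\<^sup>2 * (norm (a - b))\<^sup>2)"
  proof -
    have "n1\<^sup>2 \<le> (norm (gv - Ga))\<^sup>2" unfolding n1_def by (rule power_mono[OF nx]) simp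
    moreover have "n2\<^sup>2 \<le> L\<^sup>2 * (norm (a - b))\<^sup>2"
    proof -
      have "n2 \<le> L * norm (a - b)" unfolding n2_def using nx lip by (rule order_trans)
      then show ?thesis by (metis n2_def norm_ge_zero power_mono power_mult_distrib)
    qed
    moreover have "n3\<^sup>2 \<le> sG" unfolding n3_def using power_mono[OF nx, of _ 2] het
      by (meson norm_ge_zero order_trans)
    ultimately show ?thesis by (simp add: n4_def)
  qed
  finally show ?thesis .
qed


theorem lemma2:
  fixes M :: "'w measure"
    and P :: "'w \<Rightarrow> real^'r::finite^'d::finite"
    and g :: "nat \<Rightarrow> nat \<Rightarrow> 'w \<Rightarrow> real^'d"
    and F :: "nat \<Rightarrow> real^'d \<Rightarrow> real"
    and gradF :: "nat \<Rightarrow> real^'d \<Rightarrow> real^'d"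
    and N \<tau> :: nat
    and \<mu> \<eta> L fstar \<sigma>L \<sigma>G :: real
    and \<theta>0 :: "real^'d"
  defines "f \<equiv> (\<lambda>x. (\<Sum>i<N. F i x) / real N)"
    and "gradf \<equiv> (\<lambda>x. (1 / real N) *\<^sub>R (\<Sum>i<N. gradF i x))"
    and "\<delta> \<equiv> real CARD('r) / real CARD('d)"
    and "\<theta> \<equiv> (\<lambda>i s w. fedslop_theta \<mu> \<eta> \<theta>0 (proj_of (P w)) (\<lambda>s'. g i s' w) s)"
    and "D \<equiv> (1 / real N) * (\<Sum>i<N. \<Sum>s<\<tau>. (\<integral>w. (norm (fedslop_theta \<mu> \<eta> \<theta>0 (proj_of (P w)) (\<lambda>s'. g i s' w) s - \<theta>0))\<^sup>2 \<partial>M))"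
  assumes N_pos: "N > 0" and tau_pos: "\<tau> > 0"
    and r_le_d: "CARD('r) \<le> CARD('d)"
    and mu: "0 \<le> \<mu>" "\<mu> < 1"
    and eta_pos: "\<eta> > 0" and L_pos: "L > 0"
    (* A1 *)
    and F_grad: "\<And>i x. i < N \<Longrightarrow> GDERIV (F i) x :> gradF i x"
    and f_lower: "\<And>x. fstar \<le> f x"
    and F_smooth: "\<And>i x y. i < N \<Longrightarrow> norm (gradF i x - gradF i y) \<le> L * norm (x - y)"
    and f_smooth: "\<And>x y. norm (gradf x - gradf y) \<le> L * norm (x - y)"
    (* algorithm randomness: Haar projection *)
    and prob: "prob_space M"
    and haar: "haar_stiefel M P"
    (* A2: stochastic gradients *)
    and g_meas: "\<And>i s. i < N \<Longrightarrow> s < \<tau> \<Longrightarrow> g i s \<in> borel_measurable M"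
    and g_int: "\<And>i s k. i < N \<Longrightarrow> s < \<tau> \<Longrightarrow> integrable M (\<lambda>w. g i s w $ k)"
    and g_unbiased: "\<And>i s k. i < N \<Longrightarrow> s < \<tau> \<Longrightarrow>
        AE w in M. real_cond_exp M (before_step M P g N s) (\<lambda>w. g i s w $ k) w
                   = gradF i (\<theta> i s w) $ k"
    and g_var_int: "\<And>i s. i < N \<Longrightarrow> s < \<tau> \<Longrightarrow>
        integrable M (\<lambda>w. (norm (g i s w - gradF i (\<theta> i s w)))\<^sup>2)"
    and g_var: "\<And>i s. i < N \<Longrightarrow> s < \<tau> \<Longrightarrow>
        AE w in M. real_cond_exp M (before_step M P g N s)
                     (\<lambda>w. (norm (g i s w - gradF i (\<theta> i s w)))\<^sup>2) w \<le> \<sigma>L\<^sup>2"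
    and heterog: "\<And>i x. i < N \<Longrightarrow> (norm (gradF i x - gradf x))\<^sup>2 \<le> \<sigma>G\<^sup>2"
    (* stepsize *)
    and eta_small: "\<eta>\<^sup>2 \<le> (1 - \<mu>\<^sup>2) / (6 * L\<^sup>2 * real \<tau> ^ 3)"
  shows "D \<le> 6 * real \<tau> ^ 4 / (1 - \<mu>\<^sup>2) * \<eta>\<^sup>2
              * (\<delta> * (norm (gradf \<theta>0))\<^sup>2 + \<sigma>L\<^sup>2 + \<sigma>G\<^sup>2)"
proof -
  interpret prob_space M by (rule prob)
  have Pm: "P \<in> borel_measurable M" and AEo: "AE w in M. transpose (P w) ** P w = mat 1"
    using haar unfolding haar_stiefel_def by auto
  define A where "A = 1 / (1 - \<mu>\<^sup>2)"
  have mu2: "\<mu>\<^sup>2 < 1" using power_strict_mono[of \<mu> 1 2] mu by simp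
  then have Apos: "0 < A" unfolding A_def by simp
  define G2 where "G2 = (norm (gradf \<theta>0))\<^sup>2"
  define X where "X = \<delta> * G2 + \<sigma>L\<^sup>2 + \<sigma>G\<^sup>2"
  define e where "e i s = (\<integral>w. (norm (\<theta> i s w - \<theta>0))\<^sup>2 \<partial>M)" for i s
  have e_nonneg: "0 \<le> e i s" for i s unfolding e_def by (rule Bochner_Integration.integral_nonneg) simp
  have Dform: "D = (1 / real N) * (\<Sum>i<N. \<Sum>s<\<tau>. e i s)"
    unfolding D_def e_def \<theta>_def ..
  have pif: "integrable M (\<lambda>w. (norm (proj_of (P w) *v gradf \<theta>0))\<^sup>2)"
    and pie: "(\<integral>w. (norm (proj_of (P w) *v gradf \<theta>0))\<^sup>2 \<partial>M) = \<delta> * G2"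
    using haar_expect[OF prob haar, of "gradf \<theta>0"] unfolding \<delta>_def G2_def by auto
  have main_i: "(\<Sum>s<\<tau>. e i s) \<le> 6 * real \<tau> ^ 4 * A * \<eta>\<^sup>2 * X" if i: "i < N" for i
  proof -
    have gcont: "continuous_on UNIV (gradF i)"
    proof (rule lipschitz_on_continuous_on)
      show "L-lipschitz_on UNIV (gradF i)"
        by (rule lipschitz_onI) (use F_smooth[OF i] L_pos in \<open>auto simp: dist_norm\<close>)
    qed
    have thmeas: "\<theta> i s \<in> borel_measurable M" if "s \<le> \<tau>" for s
      using fl_meas[OF Pm, of s "g i" \<mu> \<eta> \<theta>0] g_meas[OF i] that
      unfolding \<theta>_def fedslop_theta_def by auto
    have gFm: "(\<lambda>w. gradF i (\<theta> i s w)) \<in> borel_measurable M" if "s \<le> \<tau>" for s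
      by (rule borel_measurable_continuous_on[OF gcont thmeas[OF that]])
    have xi_int: "integrable M (\<lambda>w. (norm (g i j w - gradF i (\<theta> i j w)))\<^sup>2)" if "j < \<tau>" for j
      by (rule g_var_int[OF i that])
    have xi_b: "(\<integral>w. (norm (g i j w - gradF i (\<theta> i j w)))\<^sup>2 \<partial>M) \<le> \<sigma>L\<^sup>2" if j: "j < \<tau>" for j
    proof (rule cond_exp_bound[OF prob _ xi_int[OF j] g_var[OF i j]])
      show "subalgebra M (before_step M P g N j)"
        by (rule before_step_sub[OF Pm]) (use g_meas j in auto)
    qed
    have pw: "AE w in M. (norm (\<theta> i s w - \<theta>0))\<^sup>2 \<le> \<eta>\<^sup>2 * (real s * (real s + 1) * A) *
        (\<Sum>j<s. 4 * ((norm (g i j w - gradF i (\<theta> i j w)))\<^sup>2 + \<sigma>G\<^sup>2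
           + (norm (proj_of (P w) *v gradf \<theta>0))\<^sup>2 + L\<^sup>2 * (norm (\<theta> i j w - \<theta>0))\<^sup>2))" for s
      using AEo
    proof eventually_elim
      case (elim w)
      have "(norm (\<theta> i s w - \<theta>0))\<^sup>2 \<le> \<eta>\<^sup>2 * (real s * (real s + 1) / (1 - \<mu>\<^sup>2)) *
          (\<Sum>j<s. (norm (proj_of (P w) *v g i j w))\<^sup>2)"
        using th_bound[OF mu, of \<eta> \<theta>0 "proj_of (P w)" "\<lambda>s'. g i s' w" s]
        unfolding \<theta>_def fedslop_theta_def by simp
      also have "\<dots> \<le> \<eta>\<^sup>2 * (real s * (real s + 1) * A) *
        (\<Sum>j<s. 4 * ((norm (g i j w - gradF i (\<theta> i j w)))\<^sup>2 + \<sigma>G\<^sup>2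
           + (norm (proj_of (P w) *v gradf \<theta>0))\<^sup>2 + L\<^sup>2 * (norm (\<theta> i j w - \<theta>0))\<^sup>2))"
      proof -
        have "(norm (proj_of (P w) *v g i j w))\<^sup>2 \<le> 4 * ((norm (g i j w - gradF i (\<theta> i j w)))\<^sup>2 + \<sigma>G\<^sup>2
           + (norm (proj_of (P w) *v gradf \<theta>0))\<^sup>2 + L\<^sup>2 * (norm (\<theta> i j w - \<theta>0))\<^sup>2)" for j
          by (rule four_terms[OF stiefel_proj(2)[OF elim]]) (use L_pos F_smooth[OF i] heterog[OF i] in auto)
        then have sm: "(\<Sum>j<s. (norm (proj_of (P w) *v g i j w))\<^sup>2) \<le> (\<Sum>j<s. 4 * ((norm (g i j w - gradF i (\<theta> i j w)))\<^sup>2 + \<sigma>G\<^sup>2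
           + (norm (proj_of (P w) *v gradf \<theta>0))\<^sup>2 + L\<^sup>2 * (norm (\<theta> i j w - \<theta>0))\<^sup>2))"
          by (intro sum_mono)
        have c: "\<eta>\<^sup>2 * (real s * (real s + 1) / (1 - \<mu>\<^sup>2)) = \<eta>\<^sup>2 * (real s * (real s + 1) * A)"
          unfolding A_def by simp
        show ?thesis unfolding c by (rule mult_left_mono[OF sm]) (use Apos in simp)
      qed
      finally show ?case .
    qed
    have IB: "integrable M (\<lambda>w. (norm (\<theta> i s w - \<theta>0))\<^sup>2) \<and>
        e i s \<le> \<eta>\<^sup>2 * (real s * (real s + 1) * A) * (\<Sum>j<s. 4 * (X + L\<^sup>2 * e i j))" if "s < \<tau>" for s
      using that
    proof (induction s rule: less_induct)
      case (less s)
      define K where "K = \<eta>\<^sup>2 * (real s * (real s + 1) * A)"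
      define B where "B w = K * (\<Sum>j<s. 4 * ((norm (g i j w - gradF i (\<theta> i j w)))\<^sup>2 + \<sigma>G\<^sup>2
           + (norm (proj_of (P w) *v gradf \<theta>0))\<^sup>2 + L\<^sup>2 * (norm (\<theta> i j w - \<theta>0))\<^sup>2))" for w
      have IHi: "integrable M (\<lambda>w. (norm (\<theta> i j w - \<theta>0))\<^sup>2)" if "j < s" for j
        using less.IH[OF that] that less.prems by auto
      have tint: "integrable M (\<lambda>w. (norm (g i j w - gradF i (\<theta> i j w)))\<^sup>2 + \<sigma>G\<^sup>2
           + (norm (proj_of (P w) *v gradf \<theta>0))\<^sup>2 + L\<^sup>2 * (norm (\<theta> i j w - \<theta>0))\<^sup>2)" if "j < s" for j
        using xi_int[of j] IHi[OF that] pif that less.prems by auto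
      have Bint: "integrable M B"
        unfolding B_def
        by (rule Bochner_Integration.integrable_mult_right, intro Bochner_Integration.integrable_sum Bochner_Integration.integrable_mult_right, rule tint, simp)
      have fm: "(\<lambda>w. (norm (\<theta> i s w - \<theta>0))\<^sup>2) \<in> borel_measurable M"
        using thmeas[of s] less.prems by auto
      have pwB: "AE w in M. (norm (\<theta> i s w - \<theta>0))\<^sup>2 \<le> B w"
        using pw[of s] unfolding B_def K_def .
      have fint: "integrable M (\<lambda>w. (norm (\<theta> i s w - \<theta>0))\<^sup>2)"
        using Bint fm
      proof (rule Bochner_Integration.integrable_bound)
        show "AE w in M. norm ((norm (\<theta> i s w - \<theta>0))\<^sup>2) \<le> norm (B w)"
          using pwB by eventually_elim auto
      qed
      have "e i s \<le> (\<integral>w. B w \<partial>M)"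
        unfolding e_def by (rule integral_mono_AE[OF fint Bint pwB])
      also have "(\<integral>w. B w \<partial>M) = K * (\<Sum>j<s. 4 * ((\<integral>w. (norm (g i j w - gradF i (\<theta> i j w)))\<^sup>2 \<partial>M) + \<sigma>G\<^sup>2
           + \<delta> * G2 + L\<^sup>2 * e i j))"
      proof -
        have "(\<integral>w. B w \<partial>M) = K * (\<Sum>j<s. 4 * (\<integral>w. ((norm (g i j w - gradF i (\<theta> i j w)))\<^sup>2 + \<sigma>G\<^sup>2
           + (norm (proj_of (P w) *v gradf \<theta>0))\<^sup>2 + L\<^sup>2 * (norm (\<theta> i j w - \<theta>0))\<^sup>2) \<partial>M))"
        proof -
          let ?T = "\<lambda>j w. (norm (g i j w - gradF i (\<theta> i j w)))\<^sup>2 + \<sigma>G\<^sup>2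
           + (norm (proj_of (P w) *v gradf \<theta>0))\<^sup>2 + L\<^sup>2 * (norm (\<theta> i j w - \<theta>0))\<^sup>2"
          have "(\<integral>w. B w \<partial>M) = K * (\<integral>w. (\<Sum>j<s. 4 * ?T j w) \<partial>M)"
            unfolding B_def by (rule integral_mult_right_zero)
          also have "(\<integral>w. (\<Sum>j<s. 4 * ?T j w) \<partial>M) = (\<Sum>j<s. (\<integral>w. 4 * ?T j w \<partial>M))"
            by (rule Bochner_Integration.integral_sum, rule Bochner_Integration.integrable_mult_right, rule tint, simp)
          also have "\<dots> = (\<Sum>j<s. 4 * (\<integral>w. ?T j w \<partial>M))"
            by (simp only: integral_mult_right_zero)
          finally show ?thesis .
        qed
        also have "\<dots> = K * (\<Sum>j<s. 4 * ((\<integral>w. (norm (g i j w - gradF i (\<theta> i j w)))\<^sup>2 \<partial>M) + \<sigma>G\<^sup>2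
           + \<delta> * G2 + L\<^sup>2 * e i j))"
        proof -
          have "(\<integral>w. ((norm (g i j w - gradF i (\<theta> i j w)))\<^sup>2 + \<sigma>G\<^sup>2
           + (norm (proj_of (P w) *v gradf \<theta>0))\<^sup>2 + L\<^sup>2 * (norm (\<theta> i j w - \<theta>0))\<^sup>2) \<partial>M)
            = (\<integral>w. (norm (g i j w - gradF i (\<theta> i j w)))\<^sup>2 \<partial>M) + \<sigma>G\<^sup>2 + \<delta> * G2 + L\<^sup>2 * e i j"
            if "j < s" for j
            using xi_int[of j] IHi[OF that] pif that less.prems
            by (simp add: e_def pie prob_space)
          then show ?thesis by simp
        qed
        finally show ?thesis .
      qed
      also have "\<dots> \<le> K * (\<Sum>j<s. 4 * (X + L\<^sup>2 * e i j))"
      proof -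
        have "(\<Sum>j<s. 4 * ((\<integral>w. (norm (g i j w - gradF i (\<theta> i j w)))\<^sup>2 \<partial>M) + \<sigma>G\<^sup>2
           + \<delta> * G2 + L\<^sup>2 * e i j)) \<le> (\<Sum>j<s. 4 * (X + L\<^sup>2 * e i j))"
          using xi_b less.prems unfolding X_def by (intro sum_mono) force
        moreover have "0 \<le> K" unfolding K_def using Apos by simp
        ultimately show ?thesis by (rule mult_left_mono)
      qed
      finally show ?case using fint unfolding K_def by simp
    qed
    define S where "S = (\<Sum>s<\<tau>. e i s)"
    have S_nonneg: "0 \<le> S" unfolding S_def by (intro sum_nonneg e_nonneg)
    have X_nonneg: "0 \<le> X" unfolding X_def G2_def \<delta>_def by simp
    have eb: "e i s \<le> 4 * \<eta>\<^sup>2 * A * (real \<tau>)\<^sup>2 * (real s * X + L\<^sup>2 * S)" if s: "s < \<tau>" for s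
    proof -
      have s1: "e i s \<le> \<eta>\<^sup>2 * (real s * (real s + 1) * A) * (4 * (real s * X + L\<^sup>2 * (\<Sum>j<s. e i j)))"
      proof -
        have "(\<Sum>j<s. 4 * (X + L\<^sup>2 * e i j)) = 4 * (real s * X + L\<^sup>2 * (\<Sum>j<s. e i j))"
          by (simp add: sum.distrib sum_distrib_right[symmetric] algebra_simps)
        then show ?thesis using IB[OF s] by simp
      qed
      have s2: "(\<Sum>j<s. e i j) \<le> S"
        unfolding S_def using s by (intro sum_mono2) (auto intro: e_nonneg)
      have se: "0 \<le> sum (e i) {..<s}" by (intro sum_nonneg e_nonneg)
      have s3: "real s * (real s + 1) \<le> (real \<tau>)\<^sup>2"
      proof -
        have "real s + 1 \<le> real \<tau>" using s by simp
        then show ?thesis by (simp add: power2_eq_square mult_mono)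
      qed
      have "\<eta>\<^sup>2 * (real s * (real s + 1) * A) * (4 * (real s * X + L\<^sup>2 * (\<Sum>j<s. e i j)))
          \<le> \<eta>\<^sup>2 * ((real \<tau>)\<^sup>2 * A) * (4 * (real s * X + L\<^sup>2 * S))"
      proof (intro mult_mono mult_left_mono mult_right_mono add_left_mono s2 s3)
      qed (use Apos X_nonneg e_nonneg se in \<open>auto intro!: sum_nonneg add_nonneg_nonneg mult_nonneg_nonneg\<close>)
      then show ?thesis using s1 by (simp add: algebra_simps)
    qed
    have gs: "(\<Sum>s<n. real s) = real n * (real n - 1) / 2" for n
      by (induction n) (auto simp: field_simps)
    have "S \<le> (\<Sum>s<\<tau>. 4 * \<eta>\<^sup>2 * A * (real \<tau>)\<^sup>2 * (real s * X + L\<^sup>2 * S))"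
      unfolding S_def by (intro sum_mono eb[unfolded S_def]) simp
    also have "\<dots> = 4 * \<eta>\<^sup>2 * A * (real \<tau>)\<^sup>2 * ((\<Sum>s<\<tau>. real s) * X + real \<tau> * L\<^sup>2 * S)"
      by (simp add: sum_distrib_left sum.distrib sum_distrib_right algebra_simps)
    also have "\<dots> \<le> 4 * \<eta>\<^sup>2 * A * (real \<tau>)\<^sup>2 * ((real \<tau>)\<^sup>2 / 2 * X + real \<tau> * L\<^sup>2 * S)"
    proof -
      have "(\<Sum>s<\<tau>. real s) \<le> (real \<tau>)\<^sup>2 / 2" unfolding gs by (simp add: power2_eq_square field_simps)
      then show ?thesis using Apos X_nonneg
        by (intro mult_left_mono add_right_mono mult_right_mono) auto
    qed
    finally have S1: "S \<le> 2 * \<eta>\<^sup>2 * A * real \<tau> ^ 4 * X + (4 * \<eta>\<^sup>2 * A * real \<tau> ^ 3 * L\<^sup>2) * S"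
      by (simp add: algebra_simps power2_eq_square power3_eq_cube power4_eq_xxxx)
    have k: "4 * \<eta>\<^sup>2 * A * real \<tau> ^ 3 * L\<^sup>2 \<le> 2 / 3"
    proof -
      have pos: "0 < 6 * L\<^sup>2 * real \<tau> ^ 3" using L_pos tau_pos by simp
      have "\<eta>\<^sup>2 * (6 * L\<^sup>2 * real \<tau> ^ 3) \<le> 1 - \<mu>\<^sup>2"
        using eta_small pos by (simp add: pos_le_divide_eq)
      then have "\<eta>\<^sup>2 * (6 * L\<^sup>2 * real \<tau> ^ 3) * A \<le> 1"
        unfolding A_def using mu2 by (simp add: divide_simps)
      then show ?thesis by (simp add: algebra_simps)
    qed
    have "S * (1 / 3) \<le> S * (1 - 4 * \<eta>\<^sup>2 * A * real \<tau> ^ 3 * L\<^sup>2)"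
      using k S_nonneg by (intro mult_left_mono) auto
    also have "\<dots> \<le> 2 * \<eta>\<^sup>2 * A * real \<tau> ^ 4 * X" using S1 by (simp add: algebra_simps)
    finally show ?thesis unfolding S_def[symmetric] by (simp add: ac_simps)
  qed
  have "D \<le> (1 / real N) * (\<Sum>i<N. 6 * real \<tau> ^ 4 * A * \<eta>\<^sup>2 * X)"
    unfolding Dform using N_pos by (intro mult_left_mono sum_mono main_i) auto
  also have "\<dots> = 6 * real \<tau> ^ 4 * A * \<eta>\<^sup>2 * X" using N_pos by simp
  also have "\<dots> = 6 * real \<tau> ^ 4 / (1 - \<mu>\<^sup>2) * \<eta>\<^sup>2
              * (\<delta> * (norm (gradf \<theta>0))\<^sup>2 + \<sigma>L\<^sup>2 + \<sigma>G\<^sup>2)"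
    unfolding A_def X_def G2_def by simp
  finally show ?thesis .
qed

end
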